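(* For every $n\geq2$ and $c\geq1$, $|UD_n((1,1,c))|=n(n-1)(n^c-2^c)$.
   Context: Let $X$ be a finite alphabet with $n\geq 2$ letters and $X^*$ the set of words over $X$; $|v|$ is the length of a word $v$. A code over $X$ is a finite sequence $C=(v_1,\ldots,v_m)$ of words over $X$ such that every $w\in X^*$ has at most one factorization into code-words: if $w=v_{i_1}\cdots v_{i_l}=v_{j_1}\cdots v_{j_{l'}}$ with $l,l'\geq1$, then $l=l'$ and $i_t=j_t$ for all $t$. (Codes are sequences, not sets.) For a finite sequence $L=(a_1,\ldots,a_m)$ of positive integers, $UD_n(L)$ is the set of all codes $(v_1,\ldots,v_m)$ over an $n$-letter alphabet with $|v_i|=a_i$ for all $i$. *)

theory Defs
  imports Main
begin

definition word_over :: "nat \<Rightarrow> nat list \<Rightarrow> bool" where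
  "word_over n w \<longleftrightarrow> set w \<subseteq> {..<n}"

definition is_code :: "nat \<Rightarrow> nat list list \<Rightarrow> bool" where
  "is_code n C \<longleftrightarrow> (\<forall>v\<in>set C. word_over n v) \<and>
     (\<forall>is js. is \<noteq> [] \<longrightarrow> js \<noteq> [] \<longrightarrow>
        set is \<subseteq> {..<length C} \<longrightarrow> set js \<subseteq> {..<length C} \<longrightarrow>
        concat (map (\<lambda>i. C ! i) is) = concat (map (\<lambda>j. C ! j) js) \<longrightarrow> is = js)"

definition UD :: "nat \<Rightarrow> nat list \<Rightarrow> nat list list set" where
  "UD n L = {C. is_code n C \<and> length C = length L \<and>
                (\<forall>i<length L. length (C ! i) = L ! i)}"

end

theory Submission
  imports Defs
begin

lemma good_all:
  assumes "set js \<subseteq> {..<3}" "2 \<notin> set js"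
  shows "set (concat (map (\<lambda>i. [[a],[b],w] ! i) js)) \<subseteq> {a,b}"
  using assms
proof (induction js)
  case (Cons j js)
  then have "j = 0 \<or> j = 1" by auto
  with Cons show ?case by auto
qed simp

lemma tw:
  assumes "set js \<subseteq> {..<3}" "2 \<in> set js" "\<not> set w \<subseteq> {a,b}"
  shows "length (takeWhile (\<lambda>x. x = a \<or> x = b) w)
     \<le> length (takeWhile (\<lambda>x. x = a \<or> x = b) (concat (map (\<lambda>i. [[a],[b],w] ! i) js)))"
  using assms
proof (induction js)
  case (Cons j js)
  show ?case
  proof (cases "j = 2")
    case True
    from Cons.prems(3) obtain x where "x \<in> set w" "\<not> (x = a \<or> x = b)" by auto
    with True show ?thesis by auto
  next
    case False
    then have "j = 0 \<or> j = 1" "2 \<in> set js" "set js \<subseteq> {..<3}" using Cons.prems by auto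
    with Cons.IH Cons.prems(3) show ?thesis by auto
  qed
qed simp

lemma code_ok:
  assumes "a \<noteq> b" "\<not> set w \<subseteq> {a,b}"
  shows "\<forall>js. ks \<noteq> [] \<longrightarrow> js \<noteq> [] \<longrightarrow> set ks \<subseteq> {..<3} \<longrightarrow> set js \<subseteq> {..<3} \<longrightarrow>
     concat (map (\<lambda>i. [[a],[b],w] ! i) ks) = concat (map (\<lambda>j. [[a],[b],w] ! j) js) \<longrightarrow> ks = js"
proof (induction ks)
  case Nil
  then show ?case by simp
next
  case (Cons i ks)
  let ?C = "[[a],[b],w]"
  let ?g = "\<lambda>x. x = a \<or> x = b"
  have wne: "w \<noteq> []" using assms(2) by auto
  have contra: False if j: "j = 0 \<or> j = 1" and js: "set js \<subseteq> {..<3}" and R: "set R \<subseteq> {..<3}"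
    and eq: "w @ concat (map (\<lambda>i. ?C ! i) R) = ?C ! j @ concat (map (\<lambda>i. ?C ! i) js)" for j js R
  proof -
    from assms(2) obtain x where x: "x \<in> set w" "\<not> ?g x" by auto
    have "2 \<in> set js"
    proof (rule ccontr)
      assume "2 \<notin> set js"
      from good_all[OF js this, of a b w] have "set (concat (map (\<lambda>i. ?C ! i) js)) \<subseteq> {a,b}" .
      moreover have "set (?C ! j) \<subseteq> {a,b}" using j by auto
      ultimately have "set (w @ concat (map (\<lambda>i. ?C ! i) R)) \<subseteq> {a,b}" using eq by simp
      with assms(2) show False by auto
    qed
    from tw[OF js this assms(2)] have le:
      "length (takeWhile ?g w) \<le> length (takeWhile ?g (concat (map (\<lambda>i. ?C ! i) js)))" .
    have "takeWhile ?g (w @ concat (map (\<lambda>i. ?C ! i) R)) = takeWhile ?g w" using x by auto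
    moreover have "takeWhile ?g (?C ! j @ concat (map (\<lambda>i. ?C ! i) js))
       = hd (?C ! j) # takeWhile ?g (concat (map (\<lambda>i. ?C ! i) js))" using j by auto
    ultimately have "takeWhile ?g w = hd (?C ! j) # takeWhile ?g (concat (map (\<lambda>i. ?C ! i) js))"
      using eq by simp
    then have "length (takeWhile ?g w) = Suc (length (takeWhile ?g (concat (map (\<lambda>i. ?C ! i) js))))"
      by (metis length_Cons)
    with le show False by simp
  qed
  show ?case
  proof (intro allI impI)
    fix js
    assume ne: "i # ks \<noteq> []" "js \<noteq> []" and s1: "set (i # ks) \<subseteq> {..<3}" and s2: "set js \<subseteq> {..<3}"
      and eq: "concat (map (\<lambda>i. ?C ! i) (i # ks)) = concat (map (\<lambda>j. ?C ! j) js)"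
    from ne obtain j js' where jsd: "js = j # js'" by (cases js) auto
    have i3: "i < 3" and j3: "j < 3" using s1 s2 jsd by auto
    have s1': "set ks \<subseteq> {..<3}" and s2': "set js' \<subseteq> {..<3}" using s1 s2 jsd by auto
    show "i # ks = js"
    proof (cases "i = j")
      case True
      then have eq': "concat (map (\<lambda>i. ?C ! i) ks) = concat (map (\<lambda>j. ?C ! j) js')"
        using eq jsd by simp
      show ?thesis
      proof (cases "ks = []")
        case True
        then have "concat (map (\<lambda>j. ?C ! j) js') = []" using eq' by simp
        then have "js' = []" using s2' wne
          by (cases js') (auto simp: less_Suc_eq numeral_3_eq_3 split: if_splits dest!: subsetD)
        then show ?thesis using True \<open>i = j\<close> jsd by simp
      next
        case False
        show ?thesis
        proof (cases "js' = []")
          case True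
          then have "concat (map (\<lambda>j. ?C ! j) ks) = []" using eq' by simp
          then have "ks = []" using s1' wne
            by (cases ks) (auto simp: less_Suc_eq numeral_3_eq_3 split: if_splits dest!: subsetD)
          with False show ?thesis by simp
        next
          case False2: False
          with Cons.IH False s1' s2' eq' have "ks = js'" by blast
          then show ?thesis using \<open>i = j\<close> jsd by simp
        qed
      qed
    next
      case False
      have eq2: "?C ! i @ concat (map (\<lambda>i. ?C ! i) ks) = ?C ! j @ concat (map (\<lambda>i. ?C ! i) js')"
        using eq jsd by simp
      show ?thesis
      proof (cases "i = 2")
        case True
        then have "j = 0 \<or> j = 1" using False j3 by auto
        from contra[OF this s2' s1'] eq2 True show ?thesis by simp
      next
        case i2: False
        show ?thesis
        proof (cases "j = 2")
          case True
          have "i = 0 \<or> i = 1" using i2 i3 by auto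
          from contra[OF this s1' s2'] eq2 True show ?thesis by simp
        next
          case j2: False
          have "(i = 0 \<and> j = 1) \<or> (i = 1 \<and> j = 0)" using i2 j2 i3 j3 False by auto
          then show ?thesis using eq2 assms(1) by auto
        qed
      qed
    qed
  qed
qed


lemma UD_char:
  assumes "c \<ge> 1"
  shows "UD n [1,1,c] = (\<lambda>((a,b),w). [[a],[b],w]) `
     (SIGMA p:{(a,b). a<n \<and> b<n \<and> a\<noteq>b}.
        {w. set w \<subseteq> {..<n} \<and> length w = c} - {w. set w \<subseteq> {fst p, snd p} \<and> length w = c})"
  (is "?L = ?f ` ?S")
proof
  show "?f ` ?S \<subseteq> ?L"
  proof
    fix C assume "C \<in> ?f ` ?S"
    then obtain p w where pw: "p \<in> {(a,b). a<n \<and> b<n \<and> a\<noteq>b}"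
      "w \<in> {w. set w \<subseteq> {..<n} \<and> length w = c} - {w. set w \<subseteq> {fst p, snd p} \<and> length w = c}"
      "C = ?f (p, w)" by blast
    obtain a b where "p = (a,b)" by (cases p)
    with pw have C: "C = [[a],[b],w]" and ab: "a < n" "b < n" "a \<noteq> b"
      and w: "set w \<subseteq> {..<n}" "length w = c" "\<not> set w \<subseteq> {a,b}" by auto
    have "is_code n C"
      unfolding is_code_def
    proof (intro conjI allI impI)
      show "\<forall>v\<in>set C. word_over n v" using C ab w by (auto simp: word_over_def)
    next
      fix ks js :: "nat list"
      assume "ks \<noteq> []" "js \<noteq> []" "set ks \<subseteq> {..<length C}" "set js \<subseteq> {..<length C}"
        "concat (map (\<lambda>i. C ! i) ks) = concat (map (\<lambda>j. C ! j) js)"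
      note prems = this
      have L: "length C = 3" using C by simp
      have k3: "set ks \<subseteq> {..<3}" "set js \<subseteq> {..<3}" using prems(3,4) unfolding L .
      show "ks = js" using code_ok[OF ab(3) w(3), of ks] C prems(1,2,5) k3 by blast
    qed
    then show "C \<in> ?L" using C w by (auto simp: UD_def less_Suc_eq numeral_3_eq_3 nth_Cons')
  qed
next
  show "?L \<subseteq> ?f ` ?S"
  proof
    fix C assume CL: "C \<in> ?L"
    then have len: "length C = 3" and l0: "length (C!0) = 1" and l1: "length (C!1) = 1"
      and l2: "length (C!2) = c" and code: "is_code n C" by (auto simp: UD_def)
    obtain x y w where C: "C = [x,y,w]" using len
      by (metis (no_types) length_0_conv length_Suc_conv numeral_3_eq_3)
    obtain a where a: "x = [a]" using l0 C by (auto simp: length_Suc_conv)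
    obtain b where b: "y = [b]" using l1 C by (auto simp: length_Suc_conv)
    have lw: "length w = c" using l2 C by simp
    have wo: "a < n" "b < n" "set w \<subseteq> {..<n}" using code C a b by (auto simp: is_code_def word_over_def)
    have uq: "\<And>ks js. ks \<noteq> [] \<Longrightarrow> js \<noteq> [] \<Longrightarrow> set ks \<subseteq> {..<3} \<Longrightarrow> set js \<subseteq> {..<3} \<Longrightarrow>
        concat (map (\<lambda>i. C ! i) ks) = concat (map (\<lambda>j. C ! j) js) \<Longrightarrow> ks = js"
      using code len unfolding is_code_def by metis
    have ab: "a \<noteq> b"
    proof
      assume "a = b"
      then have "[0::nat] = [1]" using uq[of "[0]" "[1]"] C a b by simp
      then show False by simp
    qed
    have nw: "\<not> set w \<subseteq> {a,b}"
    proof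
      assume sw: "set w \<subseteq> {a,b}"
      define js where "js = map (\<lambda>x. if x = a then 0 else 1::nat) w"
      have "map (\<lambda>j. C ! j) js = map (\<lambda>x. [x]) w"
        unfolding js_def using sw C a b by (auto simp: subset_iff)
      then have cc: "concat (map (\<lambda>j. C ! j) js) = w" by (simp add: concat_map_singleton)
      have "w \<noteq> []" using lw assms by auto
      have "js \<noteq> []" using \<open>w \<noteq> []\<close> by (simp add: js_def)
      moreover have "set js \<subseteq> {..<3}" by (auto simp: js_def)
      ultimately have "[2] = js" using uq[of "[2]" js] cc C by simp
      then show False unfolding js_def by (cases w) (auto split: if_splits)
    qed
    show "C \<in> ?f ` ?S"
      using C a b lw wo ab nw by (auto intro!: image_eqI[where x="((a,b),w)"])
  qed
qed

theorem proposition2: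
  fixes n c :: nat
  assumes "n \<ge> 2" and "c \<ge> 1"
  shows "card (UD n [1, 1, c]) = n * (n - 1) * (n ^ c - 2 ^ c)"
proof -
  let ?P = "{(a,b). a<n \<and> b<n \<and> a\<noteq>b}"
  let ?W = "\<lambda>p. {w. set w \<subseteq> {..<n} \<and> length w = c} - {w. set w \<subseteq> {fst p, snd p} \<and> length w = c}"
  let ?f = "\<lambda>((a,b),w). [[a::nat],[b],w]"
  have inj: "inj_on ?f (SIGMA p:?P. ?W p)" by (auto simp: inj_on_def)
  have finP: "finite ?P" by (rule finite_subset[of _ "{..<n} \<times> {..<n}"]) auto
  have cW: "card (?W p) = n ^ c - 2 ^ c" if hp: "p \<in> ?P" for p
  proof -
    obtain a b where p: "p = (a,b)" "a < n" "b < n" "a \<noteq> b" using hp by (cases p) auto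
    have sub: "{w. set w \<subseteq> {a, b} \<and> length w = c} \<subseteq> {w. set w \<subseteq> {..<n} \<and> length w = c}"
      using p by auto
    have fin: "finite {w. set w \<subseteq> {a, b} \<and> length w = c}"
      by (rule finite_lists_length_eq) simp
    have "card (?W p) = card {w. set w \<subseteq> {..<n} \<and> length w = c} - card {w. set w \<subseteq> {a, b} \<and> length w = c}"
      using p by (simp add: card_Diff_subset[OF fin sub])
    also have "\<dots> = n ^ c - 2 ^ c" using p by (simp add: card_lists_length_eq numeral_2_eq_2)
    finally show ?thesis .
  qed
  have cP: "card ?P = n * (n - 1)"
  proof -
    have eq: "?P = ({..<n} \<times> {..<n}) - (\<lambda>a. (a,a)) ` {..<n}" by auto
    have "card ?P = card ({..<n} \<times> {..<n}) - card ((\<lambda>a. (a,a)) ` {..<n})"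
      unfolding eq by (rule card_Diff_subset) auto
    also have "card ((\<lambda>a. (a,a)) ` {..<n}) = n"
      by (subst card_image) (auto simp: inj_on_def)
    finally show ?thesis by (simp add: card_cartesian_product diff_mult_distrib2)
  qed
  have finW: "finite (?W p)" for p
    by (rule finite_Diff, rule finite_lists_length_eq) simp
  have "card (UD n [1,1,c]) = card (SIGMA p:?P. ?W p)"
    unfolding UD_char[OF assms(2)] by (rule card_image[OF inj])
  also have "\<dots> = (\<Sum>p\<in>?P. card (?W p))" by (rule card_SigmaI[OF finP]) (simp add: finW)
  also have "\<dots> = (\<Sum>p\<in>?P. n ^ c - 2 ^ c)" by (rule sum.cong) (auto simp: cW)
  also have "\<dots> = n * (n - 1) * (n ^ c - 2 ^ c)" using cP by simp
  finally show ?thesis .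
qed

end
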